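(* Let $\mathfrak S=(S,\xrightarrow{F},\le)$ be a functional WSTS. Then its completion $\widehat{\mathfrak S}$ is a (complete, functional) WSTS if and only if $(S,\le)$ is $\omega^2$-wqo.
   Context: A functional WSTS $(S,\xrightarrow{F},\le)$: $(S,\le)$ is a well partial order (well-founded, no infinite antichain), and $F$ is a finite set of partial monotonic maps $f:S\rightharpoonup S$ (domain upward-closed, $f$ monotone on its domain); transitions are $s\to f(s)$. A WSTS is a monotonic ordered transition system whose order is a well (quasi-)order; a complete functional WSTS is one whose state space is a continuous dcpo which is well-ordered, with partial continuous maps (Scott-open domain, preserving lubs of directed subsets of the domain). Completion: an ideal of $S$ is a nonempty downward-closed directed subset; $\widehat S=\mathrm{Idl}(S)$ ordered by inclusion; for $f\in F$, $\widehat f$ has domain $\{C\in\widehat S\mid C\cap\operatorname{dom}f\neq\emptyset\}$ and $\widehat f(C)=\downarrow f\langle C\cap\operatorname{dom} f\rangle$; $\widehat{\mathfrak S}=(\widehat S,\xrightarrow{\{\widehat f\mid f\in F\}},\subseteq)$. Rado's structure: $X_{\mathrm{Rado}}=\{(m,n)\in\mathbb N^2\mid m<n\}$ with $(m,n)\le(m',n')$ iff ($m=m'$ and $n\le n'$) or $n<m'$. A wqo is $\omega^2$-wqo if it contains no subset order-isomorphic (with the induced order) to $X_{\mathrm{Rado}}$. *)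

theory Defs
  imports Main
begin

definition partial_order_on :: "'a set \<Rightarrow> ('a \<Rightarrow> 'a \<Rightarrow> bool) \<Rightarrow> bool" where
  "partial_order_on S le \<longleftrightarrow>
     (\<forall>x\<in>S. le x x) \<and>
     (\<forall>x\<in>S. \<forall>y\<in>S. le x y \<and> le y x \<longrightarrow> x = y) \<and>
     (\<forall>x\<in>S. \<forall>y\<in>S. \<forall>z\<in>S. le x y \<and> le y z \<longrightarrow> le x z)"

definition antichain_on :: "'a set \<Rightarrow> ('a \<Rightarrow> 'a \<Rightarrow> bool) \<Rightarrow> 'a set \<Rightarrow> bool" where
  "antichain_on S le A \<longleftrightarrow> A \<subseteq> S \<and> (\<forall>x\<in>A. \<forall>y\<in>A. x \<noteq> y \<longrightarrow> \<not> le x y \<and> \<not> le y x)"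

definition wpo_on :: "'a set \<Rightarrow> ('a \<Rightarrow> 'a \<Rightarrow> bool) \<Rightarrow> bool" where
  "wpo_on S le \<longleftrightarrow> partial_order_on S le \<and>
     wfp_on S (\<lambda>x y. le x y \<and> x \<noteq> y) \<and>
     (\<forall>A. antichain_on S le A \<longrightarrow> finite A)"

definition pdom :: "'a set \<Rightarrow> ('a \<Rightarrow> 'b option) \<Rightarrow> 'a set" where
  "pdom S f = {x\<in>S. f x \<noteq> None}"

definition functional_WSTS :: "'a set \<Rightarrow> ('a \<Rightarrow> 'a \<Rightarrow> bool) \<Rightarrow> ('a \<Rightarrow> 'a option) set \<Rightarrow> bool" where
  "functional_WSTS S le F \<longleftrightarrow> wpo_on S le \<and> finite F \<and>
     (\<forall>f\<in>F. (\<forall>x\<in>pdom S f. the (f x) \<in> S) \<and>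
            (\<forall>x\<in>pdom S f. \<forall>y\<in>S. le x y \<longrightarrow> y \<in> pdom S f) \<and>
            (\<forall>x\<in>pdom S f. \<forall>y\<in>pdom S f. le x y \<longrightarrow> le (the (f x)) (the (f y))))"

definition directed_on :: "'a set \<Rightarrow> ('a \<Rightarrow> 'a \<Rightarrow> bool) \<Rightarrow> 'a set \<Rightarrow> bool" where
  "directed_on S le D \<longleftrightarrow> D \<subseteq> S \<and> D \<noteq> {} \<and> (\<forall>x\<in>D. \<forall>y\<in>D. \<exists>z\<in>D. le x z \<and> le y z)"

definition is_lub :: "'a set \<Rightarrow> ('a \<Rightarrow> 'a \<Rightarrow> bool) \<Rightarrow> 'a set \<Rightarrow> 'a \<Rightarrow> bool" where
  "is_lub S le D d \<longleftrightarrow> d \<in> S \<and> (\<forall>x\<in>D. le x d) \<and> (\<forall>u\<in>S. (\<forall>x\<in>D. le x u) \<longrightarrow> le d u)"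

definition dcpo_on :: "'a set \<Rightarrow> ('a \<Rightarrow> 'a \<Rightarrow> bool) \<Rightarrow> bool" where
  "dcpo_on S le \<longleftrightarrow> partial_order_on S le \<and> (\<forall>D. directed_on S le D \<longrightarrow> (\<exists>d. is_lub S le D d))"

definition way_below :: "'a set \<Rightarrow> ('a \<Rightarrow> 'a \<Rightarrow> bool) \<Rightarrow> 'a \<Rightarrow> 'a \<Rightarrow> bool" where
  "way_below S le x y \<longleftrightarrow>
     (\<forall>D d. directed_on S le D \<and> is_lub S le D d \<and> le y d \<longrightarrow> (\<exists>e\<in>D. le x e))"

definition continuous_dcpo_on :: "'a set \<Rightarrow> ('a \<Rightarrow> 'a \<Rightarrow> bool) \<Rightarrow> bool" where
  "continuous_dcpo_on S le \<longleftrightarrow> dcpo_on S le \<and>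
     (\<forall>x\<in>S. directed_on S le {y\<in>S. way_below S le y x} \<and> is_lub S le {y\<in>S. way_below S le y x} x)"

definition scott_open_on :: "'a set \<Rightarrow> ('a \<Rightarrow> 'a \<Rightarrow> bool) \<Rightarrow> 'a set \<Rightarrow> bool" where
  "scott_open_on S le U \<longleftrightarrow> U \<subseteq> S \<and> (\<forall>x\<in>U. \<forall>y\<in>S. le x y \<longrightarrow> y \<in> U) \<and>
     (\<forall>D d. directed_on S le D \<and> is_lub S le D d \<and> d \<in> U \<longrightarrow> D \<inter> U \<noteq> {})"

definition partial_continuous_on :: "'a set \<Rightarrow> ('a \<Rightarrow> 'a \<Rightarrow> bool) \<Rightarrow> ('a \<Rightarrow> 'a option) \<Rightarrow> bool" where
  "partial_continuous_on S le f \<longleftrightarrow> scott_open_on S le (pdom S f) \<and>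
     (\<forall>D d. directed_on S le D \<and> D \<subseteq> pdom S f \<and> is_lub S le D d \<longrightarrow>
        is_lub S le ((\<lambda>x. the (f x)) ` D) (the (f d)))"

definition complete_functional_WSTS :: "'a set \<Rightarrow> ('a \<Rightarrow> 'a \<Rightarrow> bool) \<Rightarrow> ('a \<Rightarrow> 'a option) set \<Rightarrow> bool" where
  "complete_functional_WSTS S le F \<longleftrightarrow> functional_WSTS S le F \<and> continuous_dcpo_on S le \<and>
     (\<forall>f\<in>F. partial_continuous_on S le f)"

definition ideal_on :: "'a set \<Rightarrow> ('a \<Rightarrow> 'a \<Rightarrow> bool) \<Rightarrow> 'a set \<Rightarrow> bool" where
  "ideal_on S le I \<longleftrightarrow> directed_on S le I \<and> (\<forall>x\<in>I. \<forall>y\<in>S. le y x \<longrightarrow> y \<in> I)"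

definition Idl :: "'a set \<Rightarrow> ('a \<Rightarrow> 'a \<Rightarrow> bool) \<Rightarrow> 'a set set" where
  "Idl S le = {I. ideal_on S le I}"

definition hat_map :: "'a set \<Rightarrow> ('a \<Rightarrow> 'a \<Rightarrow> bool) \<Rightarrow> ('a \<Rightarrow> 'a option) \<Rightarrow> 'a set \<Rightarrow> 'a set option" where
  "hat_map S le f C =
     (if C \<in> Idl S le \<and> C \<inter> pdom S f \<noteq> {}
      then Some {y\<in>S. \<exists>x\<in>C \<inter> pdom S f. le y (the (f x))}
      else None)"

definition completion_maps :: "'a set \<Rightarrow> ('a \<Rightarrow> 'a \<Rightarrow> bool) \<Rightarrow> ('a \<Rightarrow> 'a option) set \<Rightarrow> ('a set \<Rightarrow> 'a set option) set" where
  "completion_maps S le F = hat_map S le ` F"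

definition X_Rado :: "(nat \<times> nat) set" where
  "X_Rado = {(m, n). m < n}"

definition rado_le :: "nat \<times> nat \<Rightarrow> nat \<times> nat \<Rightarrow> bool" where
  "rado_le p q \<longleftrightarrow> (fst p = fst q \<and> snd p \<le> snd q) \<or> snd p < fst q"

definition contains_Rado :: "'a set \<Rightarrow> ('a \<Rightarrow> 'a \<Rightarrow> bool) \<Rightarrow> bool" where
  "contains_Rado S le \<longleftrightarrow> (\<exists>g. inj_on g X_Rado \<and> g ` X_Rado \<subseteq> S \<and>
     (\<forall>p\<in>X_Rado. \<forall>q\<in>X_Rado. rado_le p q \<longleftrightarrow> le (g p) (g q)))"

definition omega2_wqo :: "'a set \<Rightarrow> ('a \<Rightarrow> 'a \<Rightarrow> bool) \<Rightarrow> bool" where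
  "omega2_wqo S le \<longleftrightarrow> wpo_on S le \<and> \<not> contains_Rado S le"

end

theory Submission
  imports Defs "HOL-Library.Ramsey" "HOL-Library.Infinite_Set"
begin


lemma wpo_po: "wpo_on S le \<Longrightarrow> partial_order_on S le"
  by (simp add: wpo_on_def)

lemma po_refl: "partial_order_on S le \<Longrightarrow> x \<in> S \<Longrightarrow> le x x"
  by (simp add: partial_order_on_def)
lemma po_trans: "partial_order_on S le \<Longrightarrow> x \<in> S \<Longrightarrow> y \<in> S \<Longrightarrow> z \<in> S \<Longrightarrow> le x y \<Longrightarrow> le y z \<Longrightarrow> le x z"
  unfolding partial_order_on_def by blast

lemma good:
  fixes x :: "nat \<Rightarrow> 'a"
  assumes wpo: "wpo_on S le" and x: "\<And>i. x i \<in> S"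
  shows "\<exists>i j. i < j \<and> le (x i) (x j)"
proof (rule ccontr)
  assume bad: "\<not> ?thesis"
  have po: "partial_order_on S le" using wpo by (simp add: wpo_on_def)
  have neq: "x i \<noteq> x j" if "i < j" for i j
    using bad that po_refl[OF po x] by metis
  define col where "col X = (if le (x (Max X)) (x (Min X)) then 0 else 1::nat)" for X :: "nat set"
  obtain Y t where Y: "infinite Y" "t<2" and hom: "\<forall>i\<in>Y. \<forall>j\<in>Y. i\<noteq>j \<longrightarrow> col {i,j} = t"
  proof -
    have "\<forall>i\<in>UNIV. \<forall>j\<in>UNIV. i \<noteq> j \<longrightarrow> col {i, j} < 2" by (simp add: col_def)
    from Ramsey2[where Z="UNIV::nat set" and s=2 and f=col, OF _ this] show ?thesis
      using that by blast
  qed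
  have colij: "col {i,j} = (if le (x j) (x i) then 0 else 1)" if "i < j" for i j
    using that by (simp add: col_def max_def min_def)
  have injY: "inj_on x Y"
    by (rule inj_onI) (metis neq linorder_neqE_nat)
  show False
  proof (cases "t = 0")
    case True
    have "\<exists>z\<in>x ` Y. \<forall>y. (le y z \<and> y \<noteq> z) \<longrightarrow> y \<notin> x ` Y"
      using wpo Y(1) x unfolding wpo_on_def wfp_on_iff_ex_minimal
      by (metis (no_types, lifting) empty_iff finite.emptyI image_is_empty image_subset_iff)
    then obtain i where i: "i \<in> Y" and min: "\<forall>y. (le y (x i) \<and> y \<noteq> x i) \<longrightarrow> y \<notin> x ` Y" by blast
    obtain j where j: "j > i" "j \<in> Y" using Y(1) infinite_nat_iff_unbounded by blast
    have "le (x j) (x i)" using hom i j True colij[of i j] by (metis less_not_refl one_neq_zero)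
    moreover have "x j \<noteq> x i" using neq j(1) by metis
    ultimately show False using min j by blast
  next
    case False
    then have t1: "t = 1" using Y(2) by simp
    have "antichain_on S le (x ` Y)"
      unfolding antichain_on_def
    proof (rule conjI)
      show "x ` Y \<subseteq> S" using x by auto
      show "\<forall>a\<in>x ` Y. \<forall>b\<in>x ` Y. a \<noteq> b \<longrightarrow> \<not> le a b \<and> \<not> le b a"
      proof (intro ballI impI)
      fix a b assume "a \<in> x ` Y" "b \<in> x ` Y" "a \<noteq> b"
      then obtain i j where ij: "i \<in> Y" "j \<in> Y" "a = x i" "b = x j" "i \<noteq> j" by blast
      show "\<not> le a b \<and> \<not> le b a"
      proof (cases "i < j")
        case True
        then show ?thesis using bad hom ij colij[of i j] t1 by (metis zero_neq_one)
      next
        case False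
        then have "j < i" using ij by simp
        then show ?thesis using bad hom ij colij[of j i] t1 by (metis zero_neq_one)
      qed
    qed
    qed
    then have "finite (x ` Y)" using wpo by (simp add: wpo_on_def)
    then show False using Y(1) injY finite_imageD by blast
  qed
qed

lemma idl_sub: "I \<in> Idl S le \<Longrightarrow> I \<subseteq> S"
  by (simp add: Idl_def ideal_on_def directed_on_def)
lemma idl_down: "I \<in> Idl S le \<Longrightarrow> x \<in> I \<Longrightarrow> y \<in> S \<Longrightarrow> le y x \<Longrightarrow> y \<in> I"
  by (simp add: Idl_def ideal_on_def)
lemma idl_dir: "I \<in> Idl S le \<Longrightarrow> x \<in> I \<Longrightarrow> y \<in> I \<Longrightarrow> \<exists>z\<in>I. le x z \<and> le y z"
  by (simp add: Idl_def ideal_on_def directed_on_def)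
lemma idl_ne: "I \<in> Idl S le \<Longrightarrow> I \<noteq> {}"
  by (simp add: Idl_def ideal_on_def directed_on_def)
lemma idlI: "I \<subseteq> S \<Longrightarrow> I \<noteq> {} \<Longrightarrow> (\<And>x y. x \<in> I \<Longrightarrow> y \<in> I \<Longrightarrow> \<exists>z\<in>I. le x z \<and> le y z)
   \<Longrightarrow> (\<And>x y. x \<in> I \<Longrightarrow> y \<in> S \<Longrightarrow> le y x \<Longrightarrow> y \<in> I) \<Longrightarrow> I \<in> Idl S le"
  by (simp add: Idl_def ideal_on_def directed_on_def)

lemma idl_wf:
  assumes wpo: "wpo_on S le"
  shows "wfp_on (Idl S le) (\<lambda>x y. x \<subseteq> y \<and> x \<noteq> y)"
  unfolding wfp_on_iff_ex_minimal
proof (intro allI impI, rule ccontr)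
  fix B assume B: "B \<subseteq> Idl S le" "B \<noteq> {}"
    and nomin: "\<not> (\<exists>z\<in>B. \<forall>y. y \<subseteq> z \<and> y \<noteq> z \<longrightarrow> y \<notin> B)"
  define D where "D = rec_nat (SOME z. z \<in> B) (\<lambda>n d. SOME y. y \<subseteq> d \<and> y \<noteq> d \<and> y \<in> B)"
  have D0: "D 0 = (SOME z. z \<in> B)" and DS: "D (Suc n) = (SOME y. y \<subseteq> D n \<and> y \<noteq> D n \<and> y \<in> B)" for n
    by (simp_all add: D_def)
  have ex: "\<And>d. d \<in> B \<Longrightarrow> \<exists>y. y \<subseteq> d \<and> y \<noteq> d \<and> y \<in> B" using nomin by blast
  have step: "D (Suc n) \<subseteq> D n \<and> D (Suc n) \<noteq> D n \<and> D (Suc n) \<in> B" if "D n \<in> B" for n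
    unfolding DS by (rule someI_ex[OF ex[OF that]])
  have DinB: "D n \<in> B" for n
  proof (induction n)
    case 0
    show ?case using B(2) D0 by (simp add: some_in_eq)
  next
    case (Suc n)
    then show ?case using step by blast
  qed
  have DB: "D n \<in> B \<and> D (Suc n) \<subseteq> D n \<and> D (Suc n) \<noteq> D n" for n
    using DinB step by blast
  have anti: "i \<le> j \<Longrightarrow> D j \<subseteq> D i" for i j
    using lift_Suc_antimono_le[of D] DB by blast
  have "\<exists>z. z \<in> D i \<and> z \<notin> D (Suc i)" for i using DB[of i] by blast
  then obtain x where x: "\<And>i. x i \<in> D i \<and> x i \<notin> D (Suc i)" by metis
  have DI: "D i \<in> Idl S le" for i using DB B(1) by blast
  have xS: "x i \<in> S" for i using x DI idl_sub by blast
  obtain i j where ij: "i < j" "le (x i) (x j)" using good[OF wpo xS] by blast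
  have "x j \<in> D (Suc i)" using anti[of "Suc i" j] ij x by auto
  then have "x i \<in> D (Suc i)" using idl_down[OF DI] xS ij by blast
  then show False using x by blast
qed

lemma antichain_of_rado:
  assumes po: "partial_order_on S le" and R: "contains_Rado S le"
  shows "\<exists>A. antichain_on (Idl S le) (\<subseteq>) A \<and> infinite A"
proof -
  obtain g where g: "g ` X_Rado \<subseteq> S" and iso: "\<forall>p\<in>X_Rado. \<forall>q\<in>X_Rado. rado_le p q \<longleftrightarrow> le (g p) (g q)"
    using R unfolding contains_Rado_def by blast
  have X: "(m,n) \<in> X_Rado \<longleftrightarrow> m < n" for m n by (simp add: X_Rado_def)
  have gS: "m < n \<Longrightarrow> g (m,n) \<in> S" for m n using g X by blast
  have gle: "m < n \<Longrightarrow> n \<le> n' \<Longrightarrow> le (g (m,n)) (g (m,n'))" for m n n'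
  proof -
    assume a: "m < n" "n \<le> n'"
    have "rado_le (m,n) (m,n')" using a by (simp add: rado_le_def)
    moreover have "(m,n) \<in> X_Rado" "(m,n') \<in> X_Rado" using a X by auto
    ultimately show ?thesis using iso by blast
  qed
  define J where "J m = {y \<in> S. \<exists>n>m. le y (g (m,n))}" for m
  have JI: "J m \<in> Idl S le" for m
  proof (rule idlI)
    show "J m \<subseteq> S" by (auto simp: J_def)
    show "J m \<noteq> {}" using gS[of m "Suc m"] po_refl[OF po] unfolding J_def by blast
    fix x y assume "x \<in> J m" "y \<in> J m"
    then obtain n1 n2 where n: "x \<in> S" "y \<in> S" "n1 > m" "n2 > m" "le x (g (m,n1))" "le y (g (m,n2))"
      by (auto simp: J_def)
    let ?z = "g (m, max n1 n2)"
    have "?z \<in> J m" using gS[of m "max n1 n2"] po_refl[OF po] n unfolding J_def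
      by (metis (no_types, lifting) max.strict_coboundedI1 mem_Collect_eq)
    moreover have "le x ?z" using po_trans[OF po] n gle[of m n1 "max n1 n2"] gS
      by (metis max.cobounded1 max.strict_coboundedI1)
    moreover have "le y ?z" using po_trans[OF po] n gle[of m n2 "max n1 n2"] gS
      by (metis max.cobounded2 max.strict_coboundedI1)
    ultimately show "\<exists>z\<in>J m. le x z \<and> le y z" by blast
  next
    fix x y assume "x \<in> J m" "y \<in> S" "le y x"
    then show "y \<in> J m" unfolding J_def using po_trans[OF po] gS by blast
  qed
  have notsub: "\<not> J m \<subseteq> J m'" if "m \<noteq> m'" for m m'
  proof
    assume sub: "J m \<subseteq> J m'"
    let ?n = "Suc (max m m')"
    have "m < ?n" by simp
    then have "g (m, ?n) \<in> J m" using gS[of m ?n] po_refl[OF po] unfolding J_def by blast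
    then obtain k where k: "k > m'" "le (g (m, ?n)) (g (m', k))" using sub unfolding J_def by blast
    then have "rado_le (m, ?n) (m', k)" using iso X by auto
    then show False using that by (auto simp: rado_le_def)
  qed
  have injJ: "inj J" by (rule injI) (metis notsub order_refl)
  have "antichain_on (Idl S le) (\<subseteq>) (range J)"
    unfolding antichain_on_def
  proof (intro conjI ballI impI)
    show "range J \<subseteq> Idl S le" using JI by auto
    fix a b assume "a \<in> range J" "b \<in> range J" "a \<noteq> b"
    then obtain m m' where "a = J m" "b = J m'" "m \<noteq> m'" by auto
    then show "\<not> a \<subseteq> b" "\<not> b \<subseteq> a" using notsub by metis+
  qed
  moreover have "infinite (range J)" using injJ finite_imageD by blast
  ultimately show ?thesis by blast
qed

lemma four_uniq:
  fixes i j k l i' j' k' l' :: nat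
  assumes "i < j" "j < k" "k < l" "i' < j'" "j' < k'" "k' < l'" and eq: "{i,j,k,l} = {i',j',k',l'}"
  shows "i = i' \<and> j = j' \<and> k = k' \<and> l = l'"
proof -
  have m1: "i \<in> {i',j',k',l'}" "j \<in> {i',j',k',l'}" "k \<in> {i',j',k',l'}" "l \<in> {i',j',k',l'}"
    unfolding eq[symmetric] by simp_all
  have m2: "i' \<in> {i,j,k,l}" "j' \<in> {i,j,k,l}" "k' \<in> {i,j,k,l}" "l' \<in> {i,j,k,l}"
    unfolding eq by simp_all
  note o = assms(1-6)
  have 1: "i = i'" using m1(1) m2(1) o by auto
  have 2: "l = l'" using m1(4) m2(4) o by auto
  have 3: "j = j'" using m1(2) m2(2) o 1 by auto
  have 4: "k = k'" using m1(3) m2(3) o 1 2 3 by auto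
  show ?thesis using 1 2 3 4 by simp
qed
lemma card4: "(i::nat) < j \<Longrightarrow> j < k \<Longrightarrow> k < l \<Longrightarrow> card {i,j,k,l} = 4"
  by simp



lemma rado_of_antichain:
  assumes wpo: "wpo_on S le" and A: "antichain_on (Idl S le) (\<subseteq>) A" "infinite A"
  shows "contains_Rado S le"
proof -
  have po: "partial_order_on S le" using wpo by (simp add: wpo_on_def)
  obtain I :: "nat \<Rightarrow> 'a set" where injI: "inj I" and IA: "range I \<subseteq> A"
    using infinite_countable_subset[OF A(2)] by blast
  have IA': "I m \<in> A" for m using IA by auto
  have AI: "A \<subseteq> Idl S le" using A(1) unfolding antichain_on_def by blast
  have II: "I m \<in> Idl S le" for m using IA' AI by blast
  have nsub: "\<not> I i \<subseteq> I j" if "i \<noteq> j" for i j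
  proof -
    have "I i \<noteq> I j" using injI that by (simp add: inj_eq)
    then show ?thesis using A(1) IA'[of i] IA'[of j] unfolding antichain_on_def by blast
  qed
  have "\<exists>z. i \<noteq> j \<longrightarrow> z \<in> I i \<and> z \<notin> I j" for i j using nsub by blast
  then obtain a where a: "\<And>i j. i \<noteq> j \<Longrightarrow> a i j \<in> I i \<and> a i j \<notin> I j" by metis
  define c where "c m k = (if k = m then (SOME z. z \<in> I m) else a m k)" for m k
  have cI: "c m k \<in> I m" for m k
    using a[of m k] idl_ne[OF II[of m]] unfolding c_def by (auto simp: some_in_eq)
  have IS: "x \<in> I m \<Longrightarrow> x \<in> S" for x m using idl_sub[OF II] by blast
  define H where "H m = rec_nat (c m 0) (\<lambda>n h. SOME z. z \<in> I m \<and> le h z \<and> le (c m (Suc n)) z)" for m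
  have H0: "H m 0 = c m 0" and HS: "H m (Suc n) = (SOME z. z \<in> I m \<and> le (H m n) z \<and> le (c m (Suc n)) z)" for m n
    by (simp_all add: H_def)
  have Hinv: "H m n \<in> I m \<and> (\<forall>k\<le>n. le (c m k) (H m n))" for m n
  proof (induction n)
    case 0
    have "le (c m 0) (c m 0)" using po_refl[OF po IS[OF cI]] .
    then show ?case using H0 cI by simp
  next
    case (Suc n)
    have "\<exists>z. z \<in> I m \<and> le (H m n) z \<and> le (c m (Suc n)) z"
      using idl_dir[OF II, of "H m n" m "c m (Suc n)"] Suc cI by blast
    from someI_ex[OF this] have z: "H m (Suc n) \<in> I m" "le (H m n) (H m (Suc n))" "le (c m (Suc n)) (H m (Suc n))"
      unfolding HS by blast+
    have "le (c m k) (H m (Suc n))" if "k \<le> Suc n" for k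
    proof (cases "k = Suc n")
      case True then show ?thesis using z by simp
    next
      case False
      then have "k \<le> n" using that by simp
      then show ?thesis using Suc z po_trans[OF po] IS cI by blast
    qed
    then show ?case using z by blast
  qed
  have HI: "H m n \<in> I m" for m n using Hinv by blast
  have HSS: "H m n \<in> S" for m n using HI IS by blast
  have Hmono: "n \<le> n' \<Longrightarrow> le (H m n) (H m n')" for m n n'
  proof (induction n' rule: dec_induct)
    case base then show ?case using po_refl[OF po] HSS by blast
  next
    case (step n')
    have "le (H m n') (H m (Suc n'))"
    proof -
      have "\<exists>z. z \<in> I m \<and> le (H m n') z \<and> le (c m (Suc n')) z"
        using idl_dir[OF II, of "H m n'" m "c m (Suc n')"] HI cI by blast
      from someI_ex[OF this] show ?thesis unfolding HS by blast
    qed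
    then show ?case using step po_trans[OF po] HSS by blast
  qed
  have Hout: "k \<le> n \<Longrightarrow> k \<noteq> m \<Longrightarrow> H m n \<notin> I k" for m n k
  proof
    assume k: "k \<le> n" "k \<noteq> m" and H: "H m n \<in> I k"
    have "c m k = a m k" using k by (simp add: c_def)
    moreover have "le (c m k) (H m n)" using Hinv[of m n] k(1) by blast
    ultimately have "le (a m k) (H m n)" by simp
    then have "a m k \<in> I k" using idl_down[OF II H] a[of m k] k IS by blast
    then show False using a[of m k] k by blast
  qed
  define Q where "Q i j k l = le (H i j) (H k l)" for i j k l
  define col where "col X = (if \<exists>i j k l. X = {i,j,k,l} \<and> i<j \<and> j<k \<and> k<l \<and> \<not> Q i j k l then 1 else 0::nat)" for X
  obtain Y t where Y: "infinite Y" "t < 2" and hom: "\<forall>X. X \<subseteq> Y \<and> finite X \<and> card X = 4 \<longrightarrow> col X = t"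
  proof -
    have "\<forall>X. X \<subseteq> (UNIV::nat set) \<and> finite X \<and> card X = 4 \<longrightarrow> col X < 2" by (simp add: col_def)
    from Ramsey[where Z="UNIV::nat set" and r=4 and s=2 and f=col, OF _ this] show ?thesis
      using that by blast
  qed
  have colQ: "col {i,j,k,l} = (if Q i j k l then 0 else 1)" if "i<j" "j<k" "k<l" for i j k l
  proof -
    have "(\<exists>i' j' k' l'. {i,j,k,l} = {i',j',k',l'} \<and> i'<j' \<and> j'<k' \<and> k'<l' \<and> \<not> Q i' j' k' l') \<longleftrightarrow> \<not> Q i j k l"
    proof
      assume "\<exists>i' j' k' l'. {i,j,k,l} = {i',j',k',l'} \<and> i'<j' \<and> j'<k' \<and> k'<l' \<and> \<not> Q i' j' k' l'"
      then obtain i' j' k' l' where w: "{i,j,k,l} = {i',j',k',l'}" "i'<j'" "j'<k'" "k'<l'" "\<not> Q i' j' k' l'" by blast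
      from four_uniq[OF that w(2-4) w(1)] w(5) show "\<not> Q i j k l" by simp
    next
      assume "\<not> Q i j k l" then show "\<exists>i' j' k' l'. {i,j,k,l} = {i',j',k',l'} \<and> i'<j' \<and> j'<k' \<and> k'<l' \<and> \<not> Q i' j' k' l'"
        using that by blast
    qed
    then show ?thesis unfolding col_def by simp
  qed
  have homQ: "i \<in> Y \<Longrightarrow> j \<in> Y \<Longrightarrow> k \<in> Y \<Longrightarrow> l \<in> Y \<Longrightarrow> i<j \<Longrightarrow> j<k \<Longrightarrow> k<l \<Longrightarrow> col {i,j,k,l} = t" for i j k l
    using hom card4[of i j k l] by simp
  define e where "e = enumerate Y"
  have eY: "e n \<in> Y" for n using enumerate_in_set[OF Y(1)] e_def by simp
  have emono: "e m < e n \<longleftrightarrow> m < n" "e m \<le> e n \<longleftrightarrow> m \<le> n" for m n using Y(1) e_def by simp_all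
  have einj: "e m = e n \<longleftrightarrow> m = n" for m n using emono(2)[of m n] emono(2)[of n m] by auto
  show ?thesis
  proof (cases "t = 0")
    case False
    then have t1: "t = 1" using Y(2) by simp
    define x where "x n = H (e (2*n)) (e (2*n+1))" for n
    have xS: "x n \<in> S" for n unfolding x_def by (rule HSS)
    obtain n m where nm: "n < m" "le (x n) (x m)" using good[OF wpo xS] by blast
    have o1: "e (2*n) < e (2*n+1)" "e (2*n+1) < e (2*m)" "e (2*m) < e (2*m+1)"
      using nm(1) emono(1) by simp_all
    have "col {e (2*n), e (2*n+1), e (2*m), e (2*m+1)} = t"
      using homQ[OF eY eY eY eY o1] .
    moreover have "Q (e (2*n)) (e (2*n+1)) (e (2*m)) (e (2*m+1))" using nm(2) unfolding Q_def x_def .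
    ultimately have "t = 0" using colQ[OF o1] by simp
    then show ?thesis using t1 by simp
  next
    case True
    have Qall: "Q (e m) (e n) (e m') (e n')" if "m < n" "n < m'" "m' < n'" for m n m' n'
    proof -
      have "col {e m, e n, e m', e n'} = 0" using homQ[OF eY eY eY eY] emono that True by simp
      then show ?thesis using colQ[of "e m" "e n" "e m'" "e n'"] emono that by (simp split: if_splits)
    qed
    define g where "g p = H (e (fst p)) (e (snd p))" for p
    have X: "(m,n) \<in> X_Rado \<longleftrightarrow> m < n" for m n by (simp add: X_Rado_def)
    have iso: "rado_le (m,n) (m',n') \<longleftrightarrow> le (g (m,n)) (g (m',n'))" if "m < n" "m' < n'" for m n m' n'
    proof
      assume "rado_le (m,n) (m',n')"
      then have "(m = m' \<and> n \<le> n') \<or> n < m'" by (simp add: rado_le_def)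
      then show "le (g (m,n)) (g (m',n'))"
      proof
        assume "m = m' \<and> n \<le> n'" then show ?thesis using Hmono emono unfolding g_def by simp
      next
        assume "n < m'" then show ?thesis using Qall that unfolding g_def Q_def by simp
      qed
    next
      assume le: "le (g (m,n)) (g (m',n'))"
      show "rado_le (m,n) (m',n')"
      proof (rule ccontr)
        assume nr: "\<not> rado_le (m,n) (m',n')"
        then have nm': "m' \<le> n" "m \<noteq> m' \<or> n' < n" by (auto simp: rado_le_def)
        show False
        proof (cases "m = m'")
          case False
          have "g (m',n') \<in> I (e m')" unfolding g_def using HI by simp
          then have "g (m,n) \<in> I (e m')" using idl_down[OF II _ _ le] HSS g_def by simp
          moreover have "g (m,n) \<notin> I (e m')" unfolding g_def
            using Hout[of "e m'" "e n" "e m"] emono einj nm' False by simp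
          ultimately show False by blast
        next
          case True
          then have nn: "n' < n" using nm' by simp
          have q: "Q (e m) (e n') (e n) (e (Suc n))" using Qall[of m n' n "Suc n"] that True nn by simp
          have "H (e n) (e (Suc n)) \<in> I (e n)" using HI by simp
          then have "H (e m) (e n') \<in> I (e n)" using idl_down[OF II] q HSS unfolding Q_def by blast
          then have "g (m,n) \<in> I (e n)" using idl_down[OF II] le HSS True unfolding g_def by simp
          moreover have "g (m,n) \<notin> I (e n)" unfolding g_def
            using Hout[of "e n" "e n" "e m"] einj that by simp
          ultimately show False by blast
        qed
      qed
    qed
    have rado_anti: "p = q" if "rado_le p q" "rado_le q p" "p \<in> X_Rado" "q \<in> X_Rado" for p q
    proof -
      obtain m n m' n' where pq: "p = (m,n)" "q = (m',n')" by (cases p, cases q) auto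
      show ?thesis using that unfolding pq rado_le_def X_Rado_def by auto
    qed
    have iso': "\<forall>p\<in>X_Rado. \<forall>q\<in>X_Rado. rado_le p q \<longleftrightarrow> le (g p) (g q)"
    proof (intro ballI)
      fix p q assume pq: "p \<in> X_Rado" "q \<in> X_Rado"
      obtain m n m' n' where "p = (m,n)" "q = (m',n')" by (cases p, cases q) auto
      then show "rado_le p q \<longleftrightarrow> le (g p) (g q)" using iso pq X by simp
    qed
    have "inj_on g X_Rado"
    proof (rule inj_onI)
      fix p q assume pq: "p \<in> X_Rado" "q \<in> X_Rado" "g p = g q"
      have "le (g p) (g q)" "le (g q) (g p)" using pq(3) po_refl[OF po HSS] unfolding g_def by simp_all
      then show "p = q" using iso' pq rado_anti by blast
    qed
    moreover have "g ` X_Rado \<subseteq> S" using HSS g_def by auto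
    ultimately show ?thesis unfolding contains_Rado_def using iso' by blast
  qed
qed



lemma dir_union:
  assumes D: "directed_on (Idl S le) (\<subseteq>) D"
  shows "\<Union>D \<in> Idl S le"
proof -
  have DI: "D \<subseteq> Idl S le" and Dne: "D \<noteq> {}" and dd: "\<And>x y. x\<in>D \<Longrightarrow> y\<in>D \<Longrightarrow> \<exists>z\<in>D. x \<subseteq> z \<and> y \<subseteq> z"
    using D unfolding directed_on_def by auto
  show ?thesis
  proof (rule idlI)
    show "\<Union>D \<subseteq> S"
    proof
      fix x assume "x \<in> \<Union>D"
      then obtain d where "d \<in> D" "x \<in> d" by blast
      then show "x \<in> S" using DI idl_sub[of d S le] by blast
    qed
    obtain d where d: "d \<in> D" using Dne by blast
    then have "d \<noteq> {}" using DI idl_ne[of d S le] by blast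
    then show "\<Union>D \<noteq> {}" using d by blast
  next
    fix x y assume "x \<in> \<Union>D" "y \<in> \<Union>D"
    then obtain d1 d2 where "d1 \<in> D" "d2 \<in> D" "x \<in> d1" "y \<in> d2" by blast
    then obtain d3 where d3: "d3 \<in> D" "x \<in> d3" "y \<in> d3" using dd by blast
    then have "d3 \<in> Idl S le" using DI by blast
    then obtain z where "z \<in> d3" "le x z" "le y z" using idl_dir[of d3 S le x y] d3 by blast
    then show "\<exists>z\<in>\<Union>D. le x z \<and> le y z" using d3 by blast
  next
    fix x y assume "x \<in> \<Union>D" "y \<in> S" "le y x"
    then obtain d where d: "d \<in> D" "x \<in> d" by blast
    then have "d \<in> Idl S le" using DI by blast
    then have "y \<in> d" using idl_down[of d S le x y] d \<open>y \<in> S\<close> \<open>le y x\<close> by blast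
    then show "y \<in> \<Union>D" using d by blast
  qed
qed

lemma is_lub_union:
  assumes D: "directed_on (Idl S le) (\<subseteq>) D"
  shows "is_lub (Idl S le) (\<subseteq>) D (\<Union>D)"
  unfolding is_lub_def
proof (intro conjI ballI impI)
  show "\<Union>D \<in> Idl S le" by (rule dir_union[OF D])
qed auto

lemma lub_eq_union:
  assumes D: "directed_on (Idl S le) (\<subseteq>) D" and l: "is_lub (Idl S le) (\<subseteq>) D d"
  shows "d = \<Union>D"
proof
  have "\<forall>u\<in>Idl S le. (\<forall>x\<in>D. x \<subseteq> u) \<longrightarrow> d \<subseteq> u" using l unfolding is_lub_def by blast
  then show "d \<subseteq> \<Union>D" using dir_union[OF D] by blast
  show "\<Union>D \<subseteq> d" using l unfolding is_lub_def by blast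
qed

lemma principal_idl:
  assumes po: "partial_order_on S le" and a: "a \<in> S"
  shows "{z\<in>S. le z a} \<in> Idl S le"
proof (rule idlI)
  show "{z\<in>S. le z a} \<noteq> {}" using po_refl[OF po a] a by blast
  show "{z\<in>S. le z a} \<subseteq> S" by blast
  fix x y assume "x \<in> {z\<in>S. le z a}" "y \<in> {z\<in>S. le z a}"
  then show "\<exists>z\<in>{z\<in>S. le z a}. le x z \<and> le y z" using po_refl[OF po a] a by blast
next
  fix x y assume "x \<in> {z\<in>S. le z a}" "y \<in> S" "le y x"
  then show "y \<in> {z\<in>S. le z a}" using po_trans[OF po, of y x a] a by blast
qed

lemma idl_po: "partial_order_on (Idl S le) (\<subseteq>)"
  unfolding partial_order_on_def by auto

lemma idl_dcpo: "dcpo_on (Idl S le) (\<subseteq>)"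
  unfolding dcpo_on_def using idl_po is_lub_union by blast



lemma idl_continuous:
  assumes po: "partial_order_on S le"
  shows "continuous_dcpo_on (Idl S le) (\<subseteq>)"
  unfolding continuous_dcpo_on_def
proof (intro conjI ballI)
  show "dcpo_on (Idl S le) (\<subseteq>)" by (rule idl_dcpo)
  fix x assume x: "x \<in> Idl S le"
  define P where "P a = {z\<in>S. le z a}" for a
  have PI: "a \<in> S \<Longrightarrow> P a \<in> Idl S le" for a using principal_idl[OF po] P_def by simp
  have xS: "x \<subseteq> S" using idl_sub[OF x] .
  have aP: "a \<in> S \<Longrightarrow> a \<in> P a" for a using po_refl[OF po] P_def by simp
  have Px: "a \<in> x \<Longrightarrow> P a \<subseteq> x" for a using idl_down[OF x] P_def by blast
  have wb1: "way_below (Idl S le) (\<subseteq>) (P a) x" if ax: "a \<in> x" for a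
    unfolding way_below_def
  proof (intro allI impI)
    fix D d assume h: "directed_on (Idl S le) (\<subseteq>) D \<and> is_lub (Idl S le) (\<subseteq>) D d \<and> x \<subseteq> d"
    then have "d = \<Union>D" using lub_eq_union by blast
    then have "a \<in> \<Union>D" using h ax by blast
    then obtain e where e: "e \<in> D" "a \<in> e" by blast
    have "e \<in> Idl S le" using h e unfolding directed_on_def by blast
    then have "P a \<subseteq> e" using idl_down[of e S le a] e(2) P_def by blast
    then show "\<exists>e\<in>D. P a \<subseteq> e" using e by blast
  qed
  define DP where "DP = P ` x"
  have DPd: "directed_on (Idl S le) (\<subseteq>) DP"
    unfolding directed_on_def DP_def
  proof (intro conjI ballI)
    show "P ` x \<subseteq> Idl S le" using PI xS by blast
    show "P ` x \<noteq> {}" using idl_ne[OF x] by blast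
    fix p q assume "p \<in> P ` x" "q \<in> P ` x"
    then obtain a b where ab: "a \<in> x" "b \<in> x" "p = P a" "q = P b" by blast
    then obtain c where c: "c \<in> x" "le a c" "le b c" using idl_dir[OF x] by blast
    have "P a \<subseteq> P c" "P b \<subseteq> P c" using c ab xS po_trans[OF po] unfolding P_def by blast+
    then show "\<exists>z\<in>P ` x. p \<subseteq> z \<and> q \<subseteq> z" using c ab by blast
  qed
  have UDP: "\<Union>DP = x" using aP Px xS unfolding DP_def by blast
  have wb2: "\<exists>a\<in>x. y \<subseteq> P a" if wy: "way_below (Idl S le) (\<subseteq>) y x" for y
  proof -
    have "is_lub (Idl S le) (\<subseteq>) DP x" using is_lub_union[OF DPd] UDP by simp
    then have "\<exists>e\<in>DP. y \<subseteq> e" using wy DPd unfolding way_below_def by blast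
    then obtain e where "e \<in> DP" "y \<subseteq> e" by blast
    then show ?thesis unfolding DP_def by blast
  qed
  let ?W = "{y \<in> Idl S le. way_below (Idl S le) (\<subseteq>) y x}"
  show "directed_on (Idl S le) (\<subseteq>) ?W"
    unfolding directed_on_def
  proof (intro conjI ballI)
    show "?W \<subseteq> Idl S le" by blast
    obtain a where "a \<in> x" using idl_ne[OF x] by blast
    then show "?W \<noteq> {}" using wb1 PI xS by blast
    fix p q assume "p \<in> ?W" "q \<in> ?W"
    then obtain a b where ab: "a \<in> x" "b \<in> x" "p \<subseteq> P a" "q \<subseteq> P b" using wb2 by blast
    then obtain c where c: "c \<in> x" "le a c" "le b c" using idl_dir[OF x] by blast
    have "P a \<subseteq> P c" "P b \<subseteq> P c" using c ab xS po_trans[OF po] unfolding P_def by blast+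
    moreover have "P c \<in> ?W" using wb1[OF c(1)] PI xS c(1) by blast
    ultimately show "\<exists>z\<in>?W. p \<subseteq> z \<and> q \<subseteq> z" using ab by blast
  qed
  show "is_lub (Idl S le) (\<subseteq>) ?W x"
    unfolding is_lub_def
  proof (intro conjI ballI impI)
    show "x \<in> Idl S le" by (rule x)
    fix y assume "y \<in> ?W" then show "y \<subseteq> x" using wb2 Px by blast
  next
    fix u assume u: "u \<in> Idl S le" "\<forall>y\<in>?W. y \<subseteq> u"
    show "x \<subseteq> u"
    proof
      fix a assume "a \<in> x"
      then have "P a \<in> ?W" using wb1 PI xS by blast
      then show "a \<in> u" using u aP xS \<open>a \<in> x\<close> by blast
    qed
  qed
qed



locale fw_map =
  fixes S :: "'a set" and le :: "'a \<Rightarrow> 'a \<Rightarrow> bool" and f :: "'a \<Rightarrow> 'a option"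
  assumes po: "partial_order_on S le"
    and fS: "\<And>x. x \<in> pdom S f \<Longrightarrow> the (f x) \<in> S"
    and fup: "\<And>x y. x \<in> pdom S f \<Longrightarrow> y \<in> S \<Longrightarrow> le x y \<Longrightarrow> y \<in> pdom S f"
    and fmono: "\<And>x y. x \<in> pdom S f \<Longrightarrow> y \<in> pdom S f \<Longrightarrow> le x y \<Longrightarrow> le (the (f x)) (the (f y))"
begin

definition hv :: "'a set \<Rightarrow> 'a set" where
  "hv C = {y\<in>S. \<exists>x\<in>C \<inter> pdom S f. le y (the (f x))}"

lemma pdom_hat: "pdom (Idl S le) (hat_map S le f) = {C \<in> Idl S le. C \<inter> pdom S f \<noteq> {}}"
  unfolding pdom_def hat_map_def by auto

lemma hat_val: "C \<in> Idl S le \<Longrightarrow> C \<inter> pdom S f \<noteq> {} \<Longrightarrow> the (hat_map S le f C) = hv C"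
  unfolding hat_map_def hv_def by simp

lemma pdomS: "x \<in> pdom S f \<Longrightarrow> x \<in> S" by (simp add: pdom_def)

lemma hv_idl:
  assumes C: "C \<in> Idl S le" and ne: "C \<inter> pdom S f \<noteq> {}"
  shows "hv C \<in> Idl S le"
proof (rule idlI)
  show "hv C \<subseteq> S" unfolding hv_def by blast
  obtain x where x: "x \<in> C \<inter> pdom S f" using ne by blast
  then have "the (f x) \<in> hv C" using fS[of x] po_refl[OF po, of "the (f x)"] unfolding hv_def by blast
  then show "hv C \<noteq> {}" by blast
next
  fix p q assume "p \<in> hv C" "q \<in> hv C"
  then obtain x1 x2 where h: "p \<in> S" "q \<in> S" "x1 \<in> C" "x1 \<in> pdom S f" "x2 \<in> C" "x2 \<in> pdom S f"
     "le p (the (f x1))" "le q (the (f x2))" unfolding hv_def by blast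
  obtain z where z: "z \<in> C" "le x1 z" "le x2 z" using idl_dir[OF C h(3) h(5)] by blast
  have zS: "z \<in> S" using idl_sub[OF C] z(1) by blast
  have zd: "z \<in> pdom S f" using fup[OF h(4) zS z(2)] .
  have m1: "le (the (f x1)) (the (f z))" using fmono[OF h(4) zd z(2)] .
  have m2: "le (the (f x2)) (the (f z))" using fmono[OF h(6) zd z(3)] .
  have fzS: "the (f z) \<in> S" using fS[OF zd] .
  have "the (f z) \<in> hv C" using fzS po_refl[OF po fzS] z(1) zd unfolding hv_def by blast
  moreover have "le p (the (f z))" using po_trans[OF po h(1) fS[OF h(4)] fzS h(7) m1] .
  moreover have "le q (the (f z))" using po_trans[OF po h(2) fS[OF h(6)] fzS h(8) m2] .
  ultimately show "\<exists>z\<in>hv C. le p z \<and> le q z" by blast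
next
  fix p q assume "p \<in> hv C" "q \<in> S" "le q p"
  then obtain x where h: "p \<in> S" "x \<in> C" "x \<in> pdom S f" "le p (the (f x))" unfolding hv_def by blast
  have "le q (the (f x))" using po_trans[OF po \<open>q \<in> S\<close> h(1) fS[OF h(3)] \<open>le q p\<close> h(4)] .
  then show "q \<in> hv C" using \<open>q \<in> S\<close> h(2,3) unfolding hv_def by blast
qed

lemma hv_mono: "C \<subseteq> C' \<Longrightarrow> hv C \<subseteq> hv C'"
  unfolding hv_def by blast

lemma hat_cont: "partial_continuous_on (Idl S le) (\<subseteq>) (hat_map S le f)"
  unfolding partial_continuous_on_def
proof (intro conjI allI impI)
  show "scott_open_on (Idl S le) (\<subseteq>) (pdom (Idl S le) (hat_map S le f))"
    unfolding scott_open_on_def pdom_hat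
  proof (intro conjI allI impI ballI)
    show "{C \<in> Idl S le. C \<inter> pdom S f \<noteq> {}} \<subseteq> Idl S le" by blast
  next
    fix x y assume "x \<in> {C \<in> Idl S le. C \<inter> pdom S f \<noteq> {}}" "y \<in> Idl S le" "x \<subseteq> y"
    then show "y \<in> {C \<in> Idl S le. C \<inter> pdom S f \<noteq> {}}" by blast
  next
    fix D d assume h: "directed_on (Idl S le) (\<subseteq>) D \<and> is_lub (Idl S le) (\<subseteq>) D d \<and> d \<in> {C \<in> Idl S le. C \<inter> pdom S f \<noteq> {}}"
    then have "d = \<Union>D" using lub_eq_union by blast
    then obtain x e where "x \<in> pdom S f" "x \<in> e" "e \<in> D" using h by blast
    moreover have "e \<in> Idl S le" using h \<open>e \<in> D\<close> unfolding directed_on_def by blast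
    ultimately show "D \<inter> {C \<in> Idl S le. C \<inter> pdom S f \<noteq> {}} \<noteq> {}" by blast
  qed
next
  fix D d assume h: "directed_on (Idl S le) (\<subseteq>) D \<and> D \<subseteq> pdom (Idl S le) (hat_map S le f) \<and> is_lub (Idl S le) (\<subseteq>) D d"
  have dU: "d = \<Union>D" using h lub_eq_union by blast
  have DI: "D \<subseteq> Idl S le" "D \<noteq> {}" using h unfolding directed_on_def by auto
  have Dp: "\<And>C. C \<in> D \<Longrightarrow> C \<inter> pdom S f \<noteq> {}" using h unfolding pdom_hat by blast
  have dI: "d \<in> Idl S le" using h unfolding is_lub_def by blast
  have dp: "d \<inter> pdom S f \<noteq> {}" using Dp DI dU by blast
  have img: "(\<lambda>x. the (hat_map S le f x)) ` D = hv ` D"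
  proof (rule image_cong[OF refl])
    fix C assume "C \<in> D" then show "the (hat_map S le f C) = hv C" using hat_val DI Dp by blast
  qed
  show "is_lub (Idl S le) (\<subseteq>) ((\<lambda>x. the (hat_map S le f x)) ` D) (the (hat_map S le f d))"
    unfolding img hat_val[OF dI dp] is_lub_def
  proof (intro conjI ballI impI)
    show "hv d \<in> Idl S le" by (rule hv_idl[OF dI dp])
    fix x assume "x \<in> hv ` D" then show "x \<subseteq> hv d" using hv_mono dU by blast
  next
    fix u assume u: "u \<in> Idl S le" "\<forall>x\<in>hv ` D. x \<subseteq> u"
    show "hv d \<subseteq> u"
    proof
      fix y assume "y \<in> hv d"
      then obtain x where x: "y \<in> S" "x \<in> d" "x \<in> pdom S f" "le y (the (f x))" unfolding hv_def by blast
      then obtain C where C: "C \<in> D" "x \<in> C" using dU by blast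
      then have "y \<in> hv C" using x unfolding hv_def by blast
      then show "y \<in> u" using u C by blast
    qed
  qed
qed

end

lemma fw_mapI:
  assumes "functional_WSTS S le F" "f \<in> F"
  shows "fw_map S le f"
  using assms unfolding functional_WSTS_def wpo_on_def fw_map_def by blast



theorem theorem4p4:
  fixes S :: "'a set" and le :: "'a \<Rightarrow> 'a \<Rightarrow> bool" and F :: "('a \<Rightarrow> 'a option) set"
  assumes "functional_WSTS S le F"
  shows "complete_functional_WSTS (Idl S le) (\<subseteq>) (completion_maps S le F) \<longleftrightarrow> omega2_wqo S le"
proof
  have wpo: "wpo_on S le" using assms by (simp add: functional_WSTS_def)
  have po: "partial_order_on S le" using wpo by (simp add: wpo_on_def)
  assume c: "complete_functional_WSTS (Idl S le) (\<subseteq>) (completion_maps S le F)"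
  then have "functional_WSTS (Idl S le) (\<subseteq>) (completion_maps S le F)"
    by (simp add: complete_functional_WSTS_def)
  then have wI: "wpo_on (Idl S le) (\<subseteq>)" by (simp add: functional_WSTS_def)
  have "\<not> contains_Rado S le"
  proof
    assume "contains_Rado S le"
    then obtain A where "antichain_on (Idl S le) (\<subseteq>) A" "infinite A"
      using antichain_of_rado[OF po] by blast
    then show False using wI unfolding wpo_on_def by blast
  qed
  then show "omega2_wqo S le" using wpo by (simp add: omega2_wqo_def)
next
  have wpo: "wpo_on S le" using assms by (simp add: functional_WSTS_def)
  have po: "partial_order_on S le" using wpo by (simp add: wpo_on_def)
  assume o: "omega2_wqo S le"
  have wI: "wpo_on (Idl S le) (\<subseteq>)"
    unfolding wpo_on_def
  proof (intro conjI allI impI)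
    show "partial_order_on (Idl S le) (\<subseteq>)" by (rule idl_po)
    show "wfp_on (Idl S le) (\<lambda>x y. x \<subseteq> y \<and> x \<noteq> y)" by (rule idl_wf[OF wpo])
    fix A assume "antichain_on (Idl S le) (\<subseteq>) A"
    then show "finite A" using rado_of_antichain[OF wpo] o unfolding omega2_wqo_def by blast
  qed
  have fin: "finite F" using assms by (simp add: functional_WSTS_def)
  have fwI: "functional_WSTS (Idl S le) (\<subseteq>) (completion_maps S le F)"
    unfolding functional_WSTS_def
  proof (intro conjI)
    show "wpo_on (Idl S le) (\<subseteq>)" by (rule wI)
    show "finite (completion_maps S le F)" using fin by (simp add: completion_maps_def)
    show "\<forall>h\<in>completion_maps S le F. (\<forall>x\<in>pdom (Idl S le) h. the (h x) \<in> Idl S le) \<and>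
            (\<forall>x\<in>pdom (Idl S le) h. \<forall>y\<in>Idl S le. x \<subseteq> y \<longrightarrow> y \<in> pdom (Idl S le) h) \<and>
            (\<forall>x\<in>pdom (Idl S le) h. \<forall>y\<in>pdom (Idl S le) h. x \<subseteq> y \<longrightarrow> the (h x) \<subseteq> the (h y))"
    proof (rule ballI)
    fix h assume "h \<in> completion_maps S le F"
    then obtain f where f: "f \<in> F" "h = hat_map S le f" by (auto simp: completion_maps_def)
    interpret fw_map S le f by (rule fw_mapI[OF assms f(1)])
    have 1: "\<forall>x\<in>pdom (Idl S le) h. the (h x) \<in> Idl S le"
      unfolding f(2) pdom_hat using hat_val hv_idl by auto
    have 2: "\<forall>x\<in>pdom (Idl S le) h. \<forall>y\<in>Idl S le. x \<subseteq> y \<longrightarrow> y \<in> pdom (Idl S le) h"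
      unfolding f(2) pdom_hat by blast
    have 3: "\<forall>x\<in>pdom (Idl S le) h. \<forall>y\<in>pdom (Idl S le) h. x \<subseteq> y \<longrightarrow> the (h x) \<subseteq> the (h y)"
      unfolding f(2) pdom_hat using hat_val hv_mono by auto
    show "(\<forall>x\<in>pdom (Idl S le) h. the (h x) \<in> Idl S le) \<and>
            (\<forall>x\<in>pdom (Idl S le) h. \<forall>y\<in>Idl S le. x \<subseteq> y \<longrightarrow> y \<in> pdom (Idl S le) h) \<and>
            (\<forall>x\<in>pdom (Idl S le) h. \<forall>y\<in>pdom (Idl S le) h. x \<subseteq> y \<longrightarrow> the (h x) \<subseteq> the (h y))"
      using 1 2 3 by blast
    qed
  qed
  show "complete_functional_WSTS (Idl S le) (\<subseteq>) (completion_maps S le F)"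
    unfolding complete_functional_WSTS_def
  proof (intro conjI ballI)
    show "functional_WSTS (Idl S le) (\<subseteq>) (completion_maps S le F)" by (rule fwI)
    show "continuous_dcpo_on (Idl S le) (\<subseteq>)" by (rule idl_continuous[OF po])
    fix h assume "h \<in> completion_maps S le F"
    then obtain f where f: "f \<in> F" "h = hat_map S le f" by (auto simp: completion_maps_def)
    interpret fw_map S le f by (rule fw_mapI[OF assms f(1)])
    show "partial_continuous_on (Idl S le) (\<subseteq>) h" unfolding f(2) by (rule hat_cont)
  qed
qed


end
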